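(* Assume $\mathrm{recc}(C)\subseteq\mathrm{recc}(P^B)$. Fix $k\in N_2$ and assume $N_0\not\subseteq J$. Then the projection of $Q'_k$ onto the $x$-variables equals $$\Big\{x\in\mathbb{R}^N_+:\sum_{i\in S}x_i-\sum_{j\in N\setminus J}\frac{x_j}{\varepsilon'_j(S)}\le0\ \ \forall S\subseteq M'\Big\}.$$
   Context: Let $A\in\mathbb{R}^{m\times n}$ have full row rank, $b\in\mathbb{R}^m$, and $P=\{x\in\mathbb{R}^n_+:Ax=b\}$. Let $C\subseteq\mathbb{R}^n$ be an open convex set. Fix a basis $B$ of $P$ with nonbasic set $N=\{1,\dots,n\}\setminus B$. Write $P=\{x:x_i=\bar b_i-\sum_{j\in N}\bar a_{ij}x_j\ (i\in B),\ x\ge0\}$ with $\bar b\ge0$. The basic solution $\bar x$ has $\bar x_i=\bar b_i$ ($i\in B$) and $0$ ($i\in N$). $P^B$ is obtained by dropping $x_i\ge0$ for $i\in B$. For $j\in N$, $\bar r^j$ has $\bar r^j_k=-\bar a_{kj}$ ($k\in B$), $\bar r^j_j=1$, and $0$ otherwise. Thus $P^B=\{\bar x+\sum_{j\in N}x_j\bar r^j:x_j\ge0\}$. It is assumed that $\bar x\notin\mathrm{cl}(C)$. For $j\in N$, $\alpha_j=\inf\{\lambda\ge0:\bar x+\lambda\bar r^j\in C\}$ and $\beta_j=\sup\{\lambda\ge0:\bar x+\lambda\bar r^j\in C\}$, with $\alpha_j=+\infty$, $\beta_j=-\infty$ if the halfline misses $C$. Define - $N_0=\{j:\alpha_j=+\infty,\beta_j=-\infty\}$;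 - $N_2=\{j:\alpha_j\in(0,\infty),\beta_j\in(\alpha_j,\infty)\}$. For a set $K$, $\mathrm{recc}(K)=\{d:x+\lambda d\in K\ \forall x\in K,\lambda\ge0\}$. We use the convention $t/+\infty=0$. For $k\in N_2$, $S_k^C=\{\bar x\}+\mathrm{conv}\big(\bigcup_{j\in N_2}\{\lambda\bar r^j:0\le\lambda<\beta_j\}\big)+\{\lambda\bar r^k:\lambda\le0\}+\mathrm{recc}(C)$. Let $J=\{i\in N:\bar r^i\in\mathrm{recc}(S_k^C)\}$. For $i\in J$, $j\in N\setminus J$, $\gamma'_{ij}=\sup\{\gamma\ge0:\bar r^i+\gamma\bar r^j\in\mathrm{recc}(S_k^C)\}$. Let $M'=\{i\in J:\gamma'_{ij}>0\ \forall j\in N\setminus J\}$. For $S\subseteq M'$, $\varepsilon'_j(S)=\min_{i\in S}\gamma'_{ij}$ if $S\neq\emptyset$, and $+\infty$ otherwise. Extended formulation. Let $m_1=|M'|$. For each $j\in N\setminus J$ let $\pi_j:\{1,\dots,m_1\}\to M'$ be a bijection with $\gamma'_{\pi_j(1),j}\le\dots\le\gamma'_{\pi_j(m_1),j}$, and let $\ell_j=\pi_j^{-1}$. Set $1/\gamma'_{\pi_j(m_1+1),j}:=0$ (and $1/\gamma'_{\pi_j(1),j}:=0$ if $m_1=0$), and $v_{m_1+1,j}:=0$. $Q'_k$ is the set of $(x,\theta,v,\lambda)$ with $x\in\mathbb{R}^N_+$, $\theta=(\theta_{ij})\ge0$ and $v=(v_{ij})\ge0$ indexed by $i\in\{1,\dots,m_1\}$,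 $j\in N\setminus J$, and $\lambda\in\mathbb{R}^{N\setminus J}$ free, satisfying: 1. $\sum_{i=1}^{m_1}\sum_{j\in N\setminus J}\theta_{ij}+\sum_{j\in N\setminus J}\lambda_j\le0$; 2. $\lambda_j-v_{1j}+x_j/\gamma'_{\pi_j(1),j}\ge0$ for all $j\in N\setminus J$; 3. $\theta_{ij}+v_{ij}-v_{i+1,j}+\big(1/\gamma'_{\pi_j(i+1),j}-1/\gamma'_{\pi_j(i),j}\big)x_j\ge0$ for all $i=1,\dots,m_1$ and $j\in N\setminus J$; 4. $\sum_{j\in N\setminus J}\theta_{\ell_j(i),j}-x_i\ge0$ for all $i\in M'$. *)

theory Defs
  imports "HOL-Analysis.Analysis" "HOL-Library.FuncSet"
begin

(* Points of R^n are real^'n; A :: real^'n^'m is the m x n constraint matrix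
   (rows indexed by 'm), b :: real^'m.  B :: 'n set is the basis, N = -B the
   nonbasic set. *)

definition recc :: "'a::real_vector set \<Rightarrow> 'a set" where
  "recc K = {d. \<forall>x\<in>K. \<forall>l::real. 0 \<le> l \<longrightarrow> x + l *\<^sub>R d \<in> K}"

definition basic_sol :: "real^'n^'m \<Rightarrow> real^'m \<Rightarrow> 'n set \<Rightarrow> real^'n" where
  "basic_sol A b B = (THE x. A *v x = b \<and> (\<forall>j. j \<notin> B \<longrightarrow> x $ j = 0))"

(* rbar^j: r_j = 1, r_l = 0 for other nonbasic l, and r_k = -abar_kj for k in B,
   i.e. the unique r with A r = 0 and these nonbasic entries *)
definition ray :: "real^'n^'m \<Rightarrow> 'n set \<Rightarrow> 'n \<Rightarrow> real^'n" where
  "ray A B j = (THE r. A *v r = 0 \<and> r $ j = 1 \<and> (\<forall>l. l \<notin> B \<and> l \<noteq> j \<longrightarrow> r $ l = 0))"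

definition is_feasible_basis :: "real^'n^'m \<Rightarrow> real^'m \<Rightarrow> 'n set \<Rightarrow> bool" where
  "is_feasible_basis A b B \<longleftrightarrow>
     card B = CARD('m) \<and> inj_on (\<lambda>j. column j A) B \<and>
     independent ((\<lambda>j. column j A) ` B) \<and>
     (\<forall>i\<in>B. 0 \<le> basic_sol A b B $ i)"

definition Pset :: "real^'n^'m \<Rightarrow> real^'m \<Rightarrow> (real^'n) set" where
  "Pset A b = {x. A *v x = b \<and> (\<forall>j. 0 \<le> x $ j)}"

definition PB :: "real^'n^'m \<Rightarrow> real^'m \<Rightarrow> 'n set \<Rightarrow> (real^'n) set" where
  "PB A b B = {x. A *v x = b \<and> (\<forall>j. j \<notin> B \<longrightarrow> 0 \<le> x $ j)}"

definition hits :: "real^'n^'m \<Rightarrow> real^'m \<Rightarrow> 'n set \<Rightarrow> (real^'n) set \<Rightarrow> 'n \<Rightarrow> real set" where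
  "hits A b B C j = {l. 0 \<le> l \<and> basic_sol A b B + l *\<^sub>R ray A B j \<in> C}"

(* inf/sup in the extended reals: Inf {} = +infinity, Sup {} = -infinity *)
definition alpha :: "real^'n^'m \<Rightarrow> real^'m \<Rightarrow> 'n set \<Rightarrow> (real^'n) set \<Rightarrow> 'n \<Rightarrow> ereal" where
  "alpha A b B C j = Inf (ereal ` hits A b B C j)"

definition beta :: "real^'n^'m \<Rightarrow> real^'m \<Rightarrow> 'n set \<Rightarrow> (real^'n) set \<Rightarrow> 'n \<Rightarrow> ereal" where
  "beta A b B C j = Sup (ereal ` hits A b B C j)"

definition N0 :: "real^'n^'m \<Rightarrow> real^'m \<Rightarrow> 'n set \<Rightarrow> (real^'n) set \<Rightarrow> 'n set" where
  "N0 A b B C = {j. j \<notin> B \<and> alpha A b B C j = \<infinity> \<and> beta A b B C j = -\<infinity>}"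

definition N2 :: "real^'n^'m \<Rightarrow> real^'m \<Rightarrow> 'n set \<Rightarrow> (real^'n) set \<Rightarrow> 'n set" where
  "N2 A b B C = {j. j \<notin> B \<and> 0 < alpha A b B C j \<and> alpha A b B C j < \<infinity>
                  \<and> alpha A b B C j < beta A b B C j \<and> beta A b B C j < \<infinity>}"

definition SkC :: "real^'n^'m \<Rightarrow> real^'m \<Rightarrow> 'n set \<Rightarrow> (real^'n) set \<Rightarrow> 'n \<Rightarrow> (real^'n) set" where
  "SkC A b B C k = {basic_sol A b B + u + l *\<^sub>R ray A B k + w | u l w.
      u \<in> convex hull (\<Union>j\<in>N2 A b B C. {t *\<^sub>R ray A B j | t. 0 \<le> t \<and> ereal t < beta A b B C j})
      \<and> l \<le> 0 \<and> w \<in> recc C}"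

definition Jset :: "real^'n^'m \<Rightarrow> real^'m \<Rightarrow> 'n set \<Rightarrow> (real^'n) set \<Rightarrow> 'n \<Rightarrow> 'n set" where
  "Jset A b B C k = {i. i \<notin> B \<and> ray A B i \<in> recc (SkC A b B C k)}"

definition gam :: "real^'n^'m \<Rightarrow> real^'m \<Rightarrow> 'n set \<Rightarrow> (real^'n) set \<Rightarrow> 'n \<Rightarrow> 'n \<Rightarrow> 'n \<Rightarrow> ereal" where
  "gam A b B C k i j = Sup (ereal ` {g. 0 \<le> g \<and> ray A B i + g *\<^sub>R ray A B j \<in> recc (SkC A b B C k)})"

definition Mset :: "real^'n^'m \<Rightarrow> real^'m \<Rightarrow> 'n set \<Rightarrow> (real^'n) set \<Rightarrow> 'n \<Rightarrow> 'n set" where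
  "Mset A b B C k = {i \<in> Jset A b B C k. \<forall>j. j \<notin> B \<and> j \<notin> Jset A b B C k \<longrightarrow> 0 < gam A b B C k i j}"

definition eps :: "real^'n^'m \<Rightarrow> real^'m \<Rightarrow> 'n set \<Rightarrow> (real^'n) set \<Rightarrow> 'n \<Rightarrow> 'n \<Rightarrow> 'n set \<Rightarrow> ereal" where
  "eps A b B C k j S = (if S = {} then \<infinity> else Min ((\<lambda>i. gam A b B C k i j) ` S))"

definition einv :: "ereal \<Rightarrow> real" where
  "einv g = (if g = \<infinity> then 0 else 1 / real_of_ereal g)"

definition sorted_perms :: "real^'n^'m \<Rightarrow> real^'m \<Rightarrow> 'n set \<Rightarrow> (real^'n) set \<Rightarrow> 'n \<Rightarrow> ('n \<Rightarrow> nat \<Rightarrow> 'n) \<Rightarrow> bool" where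
  "sorted_perms A b B C k \<pi> \<longleftrightarrow>
     (\<forall>j. j \<notin> B \<and> j \<notin> Jset A b B C k \<longrightarrow>
        bij_betw (\<pi> j) {1..card (Mset A b B C k)} (Mset A b B C k) \<and>
        (\<forall>p q. 1 \<le> p \<and> p \<le> q \<and> q \<le> card (Mset A b B C k) \<longrightarrow>
            gam A b B C k (\<pi> j p) j \<le> gam A b B C k (\<pi> j q) j))"

(* Q'_k: tuples (x, theta, v, lambda); x in R^N_+ encoded as x \<in> N \<rightarrow>\<^sub>E {0..};
   theta, v indexed by i in {1..m1}, j in N\J; lambda indexed by j in N\J. *)
definition Qk :: "real^'n^'m \<Rightarrow> real^'m \<Rightarrow> 'n set \<Rightarrow> (real^'n) set \<Rightarrow> 'n \<Rightarrow> ('n \<Rightarrow> nat \<Rightarrow> 'n)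
     \<Rightarrow> (('n \<Rightarrow> real) \<times> (nat \<Rightarrow> 'n \<Rightarrow> real) \<times> (nat \<Rightarrow> 'n \<Rightarrow> real) \<times> ('n \<Rightarrow> real)) set" where
  "Qk A b B C k \<pi> =
    (let N = - B; J = Jset A b B C k; NJ = N - J; M = Mset A b B C k; m1 = card M;
         g = (\<lambda>j i. if i \<in> {1..m1} then einv (gam A b B C k (\<pi> j i) j) else 0);
         ell = (\<lambda>j i. inv_into {1..m1} (\<pi> j) i)
     in {(x, \<theta>, v, lam). 
          let vv = (\<lambda>i j. if i \<in> {1..m1} then v i j else 0) in
          x \<in> N \<rightarrow>\<^sub>E {0..} \<and>
          (\<forall>i\<in>{1..m1}. \<forall>j\<in>NJ. 0 \<le> \<theta> i j \<and> 0 \<le> v i j) \<and>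
          (\<Sum>i\<in>{1..m1}. \<Sum>j\<in>NJ. \<theta> i j) + (\<Sum>j\<in>NJ. lam j) \<le> 0 \<and>
          (\<forall>j\<in>NJ. 0 \<le> lam j - vv 1 j + x j * g j 1) \<and>
          (\<forall>i\<in>{1..m1}. \<forall>j\<in>NJ. 0 \<le> \<theta> i j + vv i j - vv (i + 1) j + (g j (i + 1) - g j i) * x j) \<and>
          (\<forall>i\<in>M. 0 \<le> (\<Sum>j\<in>NJ. \<theta> (ell j i) j) - x i)})"

end

theory Submission
  imports Defs
begin


definition hallc :: "'k set \<Rightarrow> 'd set \<Rightarrow> ('k \<Rightarrow> real) \<Rightarrow> ('d \<Rightarrow> real) \<Rightarrow> ('k \<Rightarrow> 'd \<Rightarrow> bool) \<Rightarrow> bool" where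
  "hallc K D w d E \<longleftrightarrow> (\<forall>S\<subseteq>D. sum d S \<le> sum w {k\<in>K. \<exists>a\<in>S. E k a})"

definition solc :: "'k set \<Rightarrow> 'd set \<Rightarrow> ('k \<Rightarrow> real) \<Rightarrow> ('d \<Rightarrow> real) \<Rightarrow> ('k \<Rightarrow> 'd \<Rightarrow> bool) \<Rightarrow> ('k \<Rightarrow> 'd \<Rightarrow> real) \<Rightarrow> bool" where
  "solc K D w d E f \<longleftrightarrow> (\<forall>k a. 0 \<le> f k a) \<and> (\<forall>k a. \<not> E k a \<longrightarrow> f k a = 0) \<and>
      (\<forall>k\<in>K. sum (f k) D \<le> w k) \<and> (\<forall>a\<in>D. (\<Sum>k\<in>K. f k a) = d a)"

lemma sol_shift:
  assumes "solc K D (\<lambda>k'. w k' - (if k' = k then t else 0)) (\<lambda>a'. d a' - (if a' = a then t else 0)) E f"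
    and "k \<in> K" "a \<in> D" "E k a" "0 \<le> t" "finite K" "finite D"
  shows "solc K D w d E (\<lambda>k' a'. f k' a' + (if k' = k \<and> a' = a then t else 0))"
proof -
  have s1: "sum (\<lambda>a'. f k' a' + (if k' = k \<and> a' = a then t else 0)) D = sum (f k') D + (if k' = k then t else 0)" for k'
    using assms by (simp add: sum.distrib)
  have s2: "(\<Sum>k'\<in>K. f k' a' + (if k' = k \<and> a' = a then t else 0)) = (\<Sum>k'\<in>K. f k' a') + (if a' = a then t else 0)" for a'
    using assms by (simp add: sum.distrib)
  show ?thesis using assms unfolding solc_def s1 s2
    by (auto simp: add_nonneg_nonneg)
qed

lemma sum_if_notin:
  assumes "finite A"
  shows "sum (\<lambda>x. if x \<in> B then 0 else g x) A = (sum g (A - B) :: real)"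
proof -
  have "sum (\<lambda>x. if x \<in> B then 0 else g x) A = sum (\<lambda>x. if x \<in> -B then g x else 0) A"
    by (rule sum.cong) auto
  also have "\<dots> = sum g (A \<inter> -B)" using assms by (simp add: sum.inter_restrict)
  also have "A \<inter> -B = A - B" by auto
  finally show ?thesis .
qed

lemma sol_remove_d:
  assumes "solc K (D - {a}) w d E f" "d a = 0" "a \<in> D" "finite D"
  shows "solc K D w d E (\<lambda>k a'. if a' = a then 0 else f k a')"
proof -
  have "sum (\<lambda>a'. if a' = a then 0 else f k a') D = sum (f k) (D - {a})" for k
    using assms sum_if_notin[of D "{a}" "f k"] by simp
  moreover have "(\<Sum>k\<in>K. if a' = a then 0 else f k a') = d a'" if "a' \<in> D" for a'
    using assms that unfolding solc_def by (cases "a' = a") auto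
  ultimately show ?thesis using assms unfolding solc_def by auto
qed

lemma sol_remove_k:
  assumes "solc (K - {k}) D w d E f" "w k = 0" "k \<in> K" "finite K"
  shows "solc K D w d E (\<lambda>k' a. if k' = k then 0 else f k' a)"
proof -
  have "(\<Sum>k'\<in>K. if k' = k then 0 else f k' a) = sum (\<lambda>k'. f k' a) (K - {k})" for a
    using assms sum_if_notin[of K "{k}" "\<lambda>k'. f k' a"] by simp
  moreover have "(\<Sum>a\<in>D. if k' = k then 0 else f k' a) \<le> w k'" if "k' \<in> K" for k'
    using assms that unfolding solc_def by (cases "k' = k") auto
  ultimately show ?thesis using assms unfolding solc_def by auto
qed

lemma sol_split:
  assumes NS_def: "NS = {k\<in>K. \<exists>a\<in>S. E k a}"
  assumes "solc NS S w d E f1" "solc (K - NS) (D - S) w d E f2" "S \<subseteq> D" "finite K" "finite D"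
  shows "solc K D w d E (\<lambda>k a. if k \<in> NS then (if a \<in> S then f1 k a else 0) else (if a \<in> S then 0 else f2 k a))"
proof -
  have fS: "finite S" using assms finite_subset by blast
  have fN: "finite NS" using assms unfolding NS_def by auto
  have NK: "NS \<subseteq> K" unfolding NS_def by auto
  have a1: "sum (\<lambda>a. if k \<in> NS then (if a \<in> S then f1 k a else 0) else (if a \<in> S then 0 else f2 k a)) D
      = (if k \<in> NS then sum (f1 k) S else sum (f2 k) (D - S))" for k
  proof -
    have "sum (\<lambda>a. if a \<in> S then f1 k a else 0) D = sum (f1 k) (D \<inter> S)"
      using assms by (simp add: sum.inter_restrict)
    moreover have "D \<inter> S = S" using assms by auto
    moreover have "sum (\<lambda>a. if a \<in> S then 0 else f2 k a) D = sum (f2 k) (D - S)"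
      using assms by (simp add: sum_if_notin)
    ultimately show ?thesis by auto
  qed
  have a2: "(\<Sum>k\<in>K. if k \<in> NS then (if a \<in> S then f1 k a else 0) else (if a \<in> S then 0 else f2 k a))
      = (if a \<in> S then (\<Sum>k\<in>NS. f1 k a) else (\<Sum>k\<in>K - NS. f2 k a))" for a
  proof -
    have "(\<Sum>k\<in>K. if k \<in> NS then f1 k a else 0) = (\<Sum>k\<in>K \<inter> NS. f1 k a)"
      using assms by (simp add: sum.inter_restrict)
    moreover have "K \<inter> NS = NS" using NK by auto
    moreover have "(\<Sum>k\<in>K. if k \<in> NS then 0 else f2 k a) = (\<Sum>k\<in>K - NS. f2 k a)"
      using assms(5) by (rule sum_if_notin)
    moreover have "a \<in> S \<Longrightarrow> (\<Sum>k\<in>K. if k \<in> NS then (if a \<in> S then f1 k a else 0) else (if a \<in> S then 0 else f2 k a))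
       = (\<Sum>k\<in>K. if k \<in> NS then f1 k a else 0)" by (rule sum.cong) auto
    moreover have "a \<notin> S \<Longrightarrow> (\<Sum>k\<in>K. if k \<in> NS then (if a \<in> S then f1 k a else 0) else (if a \<in> S then 0 else f2 k a))
       = (\<Sum>k\<in>K. if k \<in> NS then 0 else f2 k a)" by (rule sum.cong) auto
    ultimately show ?thesis by (cases "a \<in> S") simp_all
  qed
  show ?thesis unfolding solc_def a1 a2
  proof (intro conjI allI ballI impI)
    fix k a show "0 \<le> (if k \<in> NS then (if a \<in> S then f1 k a else 0) else (if a \<in> S then 0 else f2 k a))"
      using assms(2,3) NS_def unfolding solc_def by auto
  next
    fix k a assume "\<not> E k a" then show "(if k \<in> NS then (if a \<in> S then f1 k a else 0) else (if a \<in> S then 0 else f2 k a)) = 0"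
      using assms(2,3) NS_def unfolding solc_def by auto
  next
    fix k assume "k \<in> K" then show "(if k \<in> NS then sum (f1 k) S else sum (f2 k) (D - S)) \<le> w k"
      using assms(2,3) NS_def unfolding solc_def by auto
  next
    fix a assume "a \<in> D" then show "(if a \<in> S then (\<Sum>k\<in>NS. f1 k a) else (\<Sum>k\<in>K - NS. f2 k a)) = d a"
      using assms(2,3) NS_def unfolding solc_def by auto
  qed
qed

lemma hall_sub:
  assumes "hallc K D w d E" "S \<subseteq> D"
  shows "hallc {k\<in>K. \<exists>a\<in>S. E k a} S w d E"
  unfolding hallc_def
proof (intro allI impI)
  fix T assume T: "T \<subseteq> S"
  have "{k \<in> {k \<in> K. \<exists>a\<in>S. E k a}. \<exists>a\<in>T. E k a} = {k\<in>K. \<exists>a\<in>T. E k a}" using T by auto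
  then show "sum d T \<le> sum w {k \<in> {k \<in> K. \<exists>a\<in>S. E k a}. \<exists>a\<in>T. E k a}"
    using assms T unfolding hallc_def by auto
qed

lemma hall_rest:
  assumes "hallc K D w d E" "S \<subseteq> D" "finite K" "finite D"
    and tight: "sum d S = sum w {k\<in>K. \<exists>a\<in>S. E k a}"
  shows "hallc (K - {k\<in>K. \<exists>a\<in>S. E k a}) (D - S) w d E"
  unfolding hallc_def
proof (intro allI impI)
  fix T assume T: "T \<subseteq> D - S"
  let ?NS = "{k\<in>K. \<exists>a\<in>S. E k a}"
  let ?NTS = "{k\<in>K. \<exists>a\<in>T \<union> S. E k a}"
  have fT: "finite T" "finite S" using T assms finite_subset[of T D] finite_subset[of S D] by auto
  have "sum d (T \<union> S) = sum d T + sum d S" using T fT by (subst sum.union_disjoint) auto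
  moreover have "sum d (T \<union> S) \<le> sum w ?NTS"
  proof -
    have "T \<union> S \<subseteq> D" using T assms(2) by auto
    then show ?thesis using assms(1) unfolding hallc_def by blast
  qed
  moreover have "sum w ?NTS = sum w {k \<in> K - ?NS. \<exists>a\<in>T. E k a} + sum w ?NS"
  proof -
    have e2: "sum w ?NTS = sum w (?NTS - ?NS) + sum w ?NS"
      using assms by (subst sum.subset_diff[of ?NS ?NTS]) auto
    have e1: "?NTS - ?NS = {k \<in> K - ?NS. \<exists>a\<in>T. E k a}" by auto
    show ?thesis using e1 e2 by simp
  qed
  ultimately show "sum d T \<le> sum w {k \<in> K - ?NS. \<exists>a\<in>T. E k a}" using tight by linarith
qed

lemma gale:
  "finite K \<Longrightarrow> finite D \<Longrightarrow> \<forall>k\<in>K. 0 \<le> w k \<Longrightarrow> \<forall>a\<in>D. 0 \<le> d a \<Longrightarrow> hallc K D w d E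
   \<Longrightarrow> \<exists>f. solc K D w d E f"
proof (induction "card K + card D" arbitrary: K D w d rule: less_induct)
  case less
  have IH: "\<And>K' D' w d. card K' + card D' < card K + card D \<Longrightarrow> finite K' \<Longrightarrow> finite D' \<Longrightarrow>
     \<forall>k\<in>K'. 0 \<le> w k \<Longrightarrow> \<forall>a\<in>D'. 0 \<le> d a \<Longrightarrow> hallc K' D' w d E \<Longrightarrow> \<exists>f. solc K' D' w d E f"
    using less.hyps by blast
  show ?case
  proof (cases "D = {}")
    case True
    then show ?thesis using less.prems by (intro exI[of _ "\<lambda>_ _. 0"]) (auto simp: solc_def)
  next
    case False
    then obtain a where aD: "a \<in> D" by auto
    show ?thesis
    proof (cases "d a = 0")
      case True
      have "\<exists>f. solc K (D - {a}) w d E f"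
      proof (rule IH)
        show "card K + card (D - {a}) < card K + card D" using card_Diff1_less[OF less.prems(2) aD] by simp
        show "hallc K (D - {a}) w d E" using less.prems(5) unfolding hallc_def by blast
        show "finite K" by (rule less.prems(1))
        show "finite (D - {a})" using less.prems(2) by simp
        show "\<forall>k\<in>K. 0 \<le> w k" by (rule less.prems(3))
        show "\<forall>a'\<in>D - {a}. 0 \<le> d a'" using less.prems(4) by simp
      qed
      then obtain f where "solc K (D - {a}) w d E f" by blast
      from sol_remove_d[OF this True aD less.prems(2)] show ?thesis by blast
    next
      case False
      then have da: "0 < d a" using less.prems(4) aD by (simp add: order_less_le)
      have "{a} \<subseteq> D" using aD by simp
      then have "sum d {a} \<le> sum w {k\<in>K. \<exists>a'\<in>{a}. E k a'}" using less.prems(5) unfolding hallc_def by blast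
      then have "d a \<le> sum w {k\<in>K. \<exists>a'\<in>{a}. E k a'}" by simp
      then have dle: "d a \<le> sum w {k\<in>K. E k a}" by simp
      have "{k\<in>K. E k a} \<noteq> {}"
      proof
        assume "{k\<in>K. E k a} = {}"
        with dle da show False by simp
      qed
      then obtain k where kK: "k \<in> K" and Eka: "E k a" by blast
      define NS where "NS S = {k\<in>K. \<exists>a\<in>S. E k a}" for S
      define slack where "slack S = sum w (NS S) - sum d S" for S
      define Ts where "Ts = {d a, w k} \<union> slack ` {S. S \<subseteq> D - {a} \<and> S \<noteq> {} \<and> k \<in> NS S}"
      have "finite {S. S \<subseteq> D - {a} \<and> S \<noteq> {} \<and> k \<in> NS S}"
        by (rule finite_subset[of _ "Pow D"]) (use less.prems(2) in auto)
      then have fTs: "finite Ts" unfolding Ts_def by simp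
      define t where "t = Min Ts"
      have tin: "t \<in> Ts" unfolding t_def by (rule Min_in[OF fTs]) (simp add: Ts_def)
      have tle: "t \<le> y" if "y \<in> Ts" for y unfolding t_def by (rule Min_le[OF fTs that])
      have slack_nn: "0 \<le> slack S" if "S \<subseteq> D" for S
        using less.prems(5) that unfolding slack_def NS_def hallc_def by simp
      have tcases: "t = d a \<or> t = w k \<or> (\<exists>S. S \<subseteq> D - {a} \<and> S \<noteq> {} \<and> k \<in> NS S \<and> t = slack S)"
        using tin unfolding Ts_def by blast
      have wk0: "0 \<le> w k" using less.prems(3) kK by blast
      have t0: "0 \<le> t" using tcases slack_nn da wk0 by auto
      have twk: "t \<le> w k" by (rule tle) (simp add: Ts_def)
      have tda: "t \<le> d a" by (rule tle) (simp add: Ts_def)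
      define w' where "w' k' = w k' - (if k' = k then t else 0)" for k'
      define d' where "d' a' = d a' - (if a' = a then t else 0)" for a'
      have w'nn: "\<forall>k'\<in>K. 0 \<le> w' k'" using twk less.prems(3) unfolding w'_def by auto
      have d'nn: "\<forall>a'\<in>D. 0 \<le> d' a'" using tda less.prems(4) unfolding d'_def by auto
      have fNS: "finite (NS S)" for S using less.prems(1) unfolding NS_def by simp
      have sw': "sum w' (NS S) = sum w (NS S) - (if k \<in> NS S then t else 0)" for S
        unfolding w'_def using fNS by (simp add: sum_subtractf)
      have sd': "sum d' S = sum d S - (if a \<in> S then t else 0)" if "S \<subseteq> D" for S
      proof -
        have "finite S" using that less.prems(2) finite_subset by blast
        then show ?thesis unfolding d'_def by (simp add: sum_subtractf)
      qed
      have hall': "hallc K D w' d' E"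
        unfolding hallc_def
      proof (intro allI impI)
        fix S assume S: "S \<subseteq> D"
        have h: "sum d S \<le> sum w (NS S)" using less.prems(5) S unfolding hallc_def NS_def by auto
        have "sum d' S \<le> sum w' (NS S)"
        proof (cases "a \<in> S")
          case True
          then have "k \<in> NS S" using kK Eka unfolding NS_def by auto
          then show ?thesis using True sw' sd' S h by auto
        next
          case aS: False
          show ?thesis
          proof (cases "k \<in> NS S")
            case True
            then have "S \<noteq> {}" unfolding NS_def by auto
            then have "slack S \<in> Ts" using aS S True unfolding Ts_def by blast
            then have "t \<le> slack S" by (rule tle)
            then show ?thesis using True aS sw' sd' S unfolding slack_def by auto
          next
            case False
            then show ?thesis using sw'[of S] sd'[OF S] h aS by simp
          qed
        qed
        then show "sum d' S \<le> sum w' {k \<in> K. \<exists>a\<in>S. E k a}" unfolding NS_def by simp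
      qed
      have "\<exists>f. solc K D w' d' E f"
      proof -
        consider "t = d a" | "t = w k" | S0 where "S0 \<subseteq> D - {a}" "S0 \<noteq> {}" "k \<in> NS S0" "t = slack S0"
          using tin unfolding Ts_def by blast
        then show ?thesis
        proof cases
          case 1
          then have d'a: "d' a = 0" unfolding d'_def by simp
          have "\<exists>f. solc K (D - {a}) w' d' E f"
          proof (rule IH)
            show "card K + card (D - {a}) < card K + card D" using card_Diff1_less[OF less.prems(2) aD] by simp
            show "hallc K (D - {a}) w' d' E" using hall' unfolding hallc_def by blast
            show "finite K" by (rule less.prems(1))
            show "finite (D - {a})" using less.prems(2) by simp
            show "\<forall>k\<in>K. 0 \<le> w' k" by (rule w'nn)
            show "\<forall>a'\<in>D - {a}. 0 \<le> d' a'" using d'nn by simp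
          qed
          then obtain f where "solc K (D - {a}) w' d' E f" by blast
          from sol_remove_d[OF this d'a aD less.prems(2)] show ?thesis by blast
        next
          case 2
          then have wk: "w' k = 0" unfolding w'_def by simp
          have "hallc (K - {k}) D w' d' E"
            unfolding hallc_def
          proof (intro allI impI)
            fix S assume S: "S \<subseteq> D"
            have "sum w' {k' \<in> K. \<exists>a\<in>S. E k' a} = sum w' {k' \<in> K - {k}. \<exists>a\<in>S. E k' a}"
            proof (cases "k \<in> {k' \<in> K. \<exists>a\<in>S. E k' a}")
              case True
              have fin: "finite {k' \<in> K. \<exists>a\<in>S. E k' a}" using less.prems(1) by simp
              have "sum w' {k' \<in> K. \<exists>a\<in>S. E k' a} = w' k + sum w' ({k' \<in> K. \<exists>a\<in>S. E k' a} - {k})"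
                by (rule sum.remove[OF fin True])
              moreover have "{k' \<in> K. \<exists>a\<in>S. E k' a} - {k} = {k' \<in> K - {k}. \<exists>a\<in>S. E k' a}" by blast
              ultimately show ?thesis using wk by simp
            next
              case False
              then have "{k' \<in> K. \<exists>a\<in>S. E k' a} = {k' \<in> K - {k}. \<exists>a\<in>S. E k' a}" by blast
              then show ?thesis by simp
            qed
            moreover have "sum d' S \<le> sum w' {k' \<in> K. \<exists>a\<in>S. E k' a}"
              using hall' S unfolding hallc_def by blast
            ultimately show "sum d' S \<le> sum w' {k' \<in> K - {k}. \<exists>a\<in>S. E k' a}" by simp
          qed
          moreover have "card (K - {k}) + card D < card K + card D"
            using card_Diff1_less[OF less.prems(1) kK] by simp
          moreover have "finite (K - {k})" using less.prems(1) by simp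
          moreover have "\<forall>k'\<in>K - {k}. 0 \<le> w' k'" using w'nn by simp
          ultimately have "\<exists>f. solc (K - {k}) D w' d' E f"
            using IH[of "K - {k}" D w' d'] less.prems(2) d'nn by blast
          then obtain f where "solc (K - {k}) D w' d' E f" by blast
          from sol_remove_k[OF this wk kK less.prems(1)] show ?thesis by blast
        next
          case 3
          have S0D: "S0 \<subseteq> D" using 3 by blast
          have tight: "sum d' S0 = sum w' (NS S0)"
          proof -
            have "a \<notin> S0" using 3 by blast
            then show ?thesis using 3 sw'[of S0] sd'[OF S0D] unfolding slack_def by simp
          qed
          have fS0: "finite S0" using S0D less.prems(2) finite_subset by blast
          have "S0 \<subset> D" using 3 aD by blast
          then have c1: "card S0 < card D" using less.prems(2) by (simp add: psubset_card_mono)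
          have "D - S0 \<subset> D" using 3 S0D by blast
          then have c2: "card (D - S0) < card D" using less.prems(2) by (simp add: psubset_card_mono)
          have cN: "card (NS S0) \<le> card K" unfolding NS_def using less.prems(1) by (intro card_mono) auto
          have cK: "card (K - NS S0) \<le> card K" using less.prems(1) by (intro card_mono) auto
          have "\<exists>f. solc (NS S0) S0 w' d' E f"
          proof (rule IH)
            show "card (NS S0) + card S0 < card K + card D" using c1 cN by simp
            show "finite (NS S0)" by (rule fNS)
            show "finite S0" by (rule fS0)
            show "\<forall>k\<in>NS S0. 0 \<le> w' k" using w'nn unfolding NS_def by simp
            show "\<forall>a\<in>S0. 0 \<le> d' a" using d'nn S0D by blast
            show "hallc (NS S0) S0 w' d' E" unfolding NS_def by (rule hall_sub[OF hall' S0D])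
          qed
          then obtain f1 where f1: "solc (NS S0) S0 w' d' E f1" by blast
          have "\<exists>f. solc (K - NS S0) (D - S0) w' d' E f"
          proof (rule IH)
            show "card (K - NS S0) + card (D - S0) < card K + card D" using c2 cK by simp
            show "finite (K - NS S0)" using less.prems(1) by simp
            show "finite (D - S0)" using less.prems(2) by simp
            show "\<forall>k\<in>K - NS S0. 0 \<le> w' k" using w'nn by simp
            show "\<forall>a\<in>D - S0. 0 \<le> d' a" using d'nn by simp
            show "hallc (K - NS S0) (D - S0) w' d' E"
              using hall_rest[OF hall' S0D less.prems(1,2)] tight unfolding NS_def by simp
          qed
          then obtain f2 where f2: "solc (K - NS S0) (D - S0) w' d' E f2" by blast
          show ?thesis using sol_split[OF NS_def[of S0] f1 f2 S0D less.prems(1,2)] by blast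
        qed
      qed
      then obtain f where "solc K D w' d' E f" by blast
      then have "solc K D w d E (\<lambda>k' a'. f k' a' + (if k' = k \<and> a' = a then t else 0))"
        unfolding w'_def d'_def using kK aD Eka t0 less.prems(1,2) by (rule sol_shift)
      then show ?thesis by blast
    qed
  qed
qed



definition epsQ :: "('a \<Rightarrow> 'a \<Rightarrow> ereal) \<Rightarrow> 'a \<Rightarrow> 'a set \<Rightarrow> ereal" where
  "epsQ gm j S = (if S = {} then \<infinity> else Min ((\<lambda>i. gm i j) ` S))"

lemma einv_nonneg: "0 < g \<Longrightarrow> 0 \<le> einv g"
  by (cases g) (auto simp: einv_def)

lemma einv_anti: "0 < g \<Longrightarrow> g \<le> h \<Longrightarrow> einv h \<le> einv g"
  by (cases g; cases h) (auto simp: einv_def frac_le)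

lemma first_index:
  fixes f :: "nat \<Rightarrow> 'a"
  assumes bij: "bij_betw f {1..n} M" and sorted: "\<forall>p q. 1 \<le> p \<and> p \<le> q \<and> q \<le> n \<longrightarrow> gm (f p) j \<le> gm (f q) j"
    and S: "S \<subseteq> M" "S \<noteq> {}"
  shows "\<exists>p0\<in>{1..n}. f p0 \<in> S \<and> (\<forall>q\<in>{1..n}. f q \<in> S \<longrightarrow> p0 \<le> q) \<and> epsQ gm j S = gm (f p0) j"
proof -
  define Q where "Q = {q\<in>{1..n}. f q \<in> S}"
  obtain a where aS: "a \<in> S" using S by blast
  then have "a \<in> f ` {1..n}" using bij S unfolding bij_betw_def by blast
  then have Qne: "Q \<noteq> {}" unfolding Q_def using aS by blast
  have fQ: "finite Q" unfolding Q_def by simp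
  define p0 where "p0 = Min Q"
  have p0Q: "p0 \<in> Q" unfolding p0_def using Min_in[OF fQ Qne] .
  have p0le: "\<forall>q\<in>{1..n}. f q \<in> S \<longrightarrow> p0 \<le> q" unfolding p0_def using fQ Q_def by auto
  have fS: "finite S"
    using S bij unfolding bij_betw_def by (metis finite_atLeastAtMost finite_imageI finite_subset)
  have "Min ((\<lambda>i. gm i j) ` S) = gm (f p0) j"
  proof (rule Min_eqI)
    show "finite ((\<lambda>i. gm i j) ` S)" using fS by simp
    show "gm (f p0) j \<in> (\<lambda>i. gm i j) ` S" using p0Q unfolding Q_def by blast
  next
    fix y assume "y \<in> (\<lambda>i. gm i j) ` S"
    then obtain b where b: "b \<in> S" "y = gm b j" by blast
    then have "b \<in> f ` {1..n}" using bij S unfolding bij_betw_def by blast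
    then obtain q where q: "q \<in> {1..n}" "b = f q" by blast
    then have "p0 \<le> q" using p0le b by blast
    moreover have "1 \<le> p0" using p0Q unfolding Q_def by simp
    ultimately show "gm (f p0) j \<le> y" using sorted q b by auto
  qed
  then show ?thesis using p0Q p0le S unfolding Q_def epsQ_def by auto
qed

definition QQ :: "'a set \<Rightarrow> 'a set \<Rightarrow> 'a set \<Rightarrow> ('a \<Rightarrow> 'a \<Rightarrow> ereal) \<Rightarrow> ('a \<Rightarrow> nat \<Rightarrow> 'a)
     \<Rightarrow> (('a \<Rightarrow> real) \<times> (nat \<Rightarrow> 'a \<Rightarrow> real) \<times> (nat \<Rightarrow> 'a \<Rightarrow> real) \<times> ('a \<Rightarrow> real)) set" where
  "QQ N J M gm \<pi> =
    (let NJ = N - J; m1 = card M;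
         g = (\<lambda>j i. if i \<in> {1..m1} then einv (gm (\<pi> j i) j) else 0);
         ell = (\<lambda>j i. inv_into {1..m1} (\<pi> j) i)
     in {(x, \<theta>, v, lam). 
          let vv = (\<lambda>i j. if i \<in> {1..m1} then v i j else 0) in
          x \<in> N \<rightarrow>\<^sub>E {0..} \<and>
          (\<forall>i\<in>{1..m1}. \<forall>j\<in>NJ. 0 \<le> \<theta> i j \<and> 0 \<le> v i j) \<and>
          (\<Sum>i\<in>{1..m1}. \<Sum>j\<in>NJ. \<theta> i j) + (\<Sum>j\<in>NJ. lam j) \<le> 0 \<and>
          (\<forall>j\<in>NJ. 0 \<le> lam j - vv 1 j + x j * g j 1) \<and>
          (\<forall>i\<in>{1..m1}. \<forall>j\<in>NJ. 0 \<le> \<theta> i j + vv i j - vv (i + 1) j + (g j (i + 1) - g j i) * x j) \<and>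
          (\<forall>i\<in>M. 0 \<le> (\<Sum>j\<in>NJ. \<theta> (ell j i) j) - x i)})"

lemma Qk_QQ: "Qk A b B C k \<pi> = QQ (- B) (Jset A b B C k) (Mset A b B C k) (gam A b B C k) \<pi>"
  unfolding Qk_def QQ_def Let_def ..

lemma eps_epsQ: "eps A b B C k j S = epsQ (gam A b B C k) j S"
  unfolding eps_def epsQ_def ..

lemma QQ_mem:
  fixes G VV
  assumes "G = (\<lambda>j i. if i \<in> {1..card M} then einv (gm (\<pi> j i) j) else 0)"
    and "VV = (\<lambda>i j. if i \<in> {1..card M} then v i j else 0)"
  shows "(x, \<theta>, v, lam) \<in> QQ N J M gm \<pi> \<longleftrightarrow>
          x \<in> N \<rightarrow>\<^sub>E {0..} \<and>
          (\<forall>i\<in>{1..card M}. \<forall>j\<in>N - J. 0 \<le> \<theta> i j \<and> 0 \<le> v i j) \<and>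
          (\<Sum>i\<in>{1..card M}. \<Sum>j\<in>N - J. \<theta> i j) + (\<Sum>j\<in>N - J. lam j) \<le> 0 \<and>
          (\<forall>j\<in>N - J. 0 \<le> lam j - VV 1 j + x j * G j 1) \<and>
          (\<forall>i\<in>{1..card M}. \<forall>j\<in>N - J. 0 \<le> \<theta> i j + VV i j - VV (i + 1) j + (G j (i + 1) - G j i) * x j) \<and>
          (\<forall>i\<in>M. 0 \<le> (\<Sum>j\<in>N - J. \<theta> (inv_into {1..card M} (\<pi> j) i) j) - x i)"
  unfolding QQ_def Let_def assms by simp

lemma nec:
  assumes finN: "finite N"
    and bij: "\<forall>j\<in>N - J. bij_betw (\<pi> j) {1..card M} M"
    and sorted: "\<forall>j\<in>N - J. \<forall>p q. 1 \<le> p \<and> p \<le> q \<and> q \<le> card M \<longrightarrow> gm (\<pi> j p) j \<le> gm (\<pi> j q) j"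
    and mem: "(x, \<theta>, v, lam) \<in> QQ N J M gm \<pi>"
    and SM: "S \<subseteq> M"
  shows "(\<Sum>i\<in>S. x i) - (\<Sum>j\<in>N - J. x j * einv (epsQ gm j S)) \<le> 0"
proof -
  define m1 where "m1 = card M"
  define NJ where "NJ = N - J"
  define G where "G = (\<lambda>j i. if i \<in> {1..card M} then einv (gm (\<pi> j i) j) else 0)"
  define VV where "VV = (\<lambda>i j. if i \<in> {1..card M} then v i j else (0::real))"
  have finNJ: "finite NJ" unfolding NJ_def using finN by simp
  note m = mem[unfolded QQ_mem[OF G_def VV_def], folded m1_def NJ_def]
  have xN: "x \<in> N \<rightarrow>\<^sub>E {0..}" and nn: "\<forall>i\<in>{1..m1}. \<forall>j\<in>NJ. 0 \<le> \<theta> i j \<and> 0 \<le> v i j"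
    and c1: "(\<Sum>i\<in>{1..m1}. \<Sum>j\<in>NJ. \<theta> i j) + (\<Sum>j\<in>NJ. lam j) \<le> 0"
    and c2: "\<forall>j\<in>NJ. 0 \<le> lam j - VV 1 j + x j * G j 1"
    and c3: "\<forall>i\<in>{1..m1}. \<forall>j\<in>NJ. 0 \<le> \<theta> i j + VV i j - VV (i + 1) j + (G j (i + 1) - G j i) * x j"
    and c4: "\<forall>i\<in>M. 0 \<le> (\<Sum>j\<in>NJ. \<theta> (inv_into {1..m1} (\<pi> j) i) j) - x i"
    using m by auto
  define e0 where "e0 j = lam j - VV 1 j + x j * G j 1" for j
  define e where "e i j = \<theta> i j + VV i j - VV (i + 1) j + (G j (i + 1) - G j i) * x j" for i j
  have VVm: "VV (Suc m1) j = 0" for j unfolding VV_def m1_def by simp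
  have Gm: "G j (Suc m1) = 0" for j unfolding G_def m1_def by simp
  have esum: "e0 j + (\<Sum>i\<in>{1..m1}. e i j) = lam j + (\<Sum>i\<in>{1..m1}. \<theta> i j)" for j
  proof -
    have t1: "(\<Sum>i\<in>{1..m1}. VV (Suc i) j - VV i j) = VV (Suc m1) j - VV 1 j"
      by (rule sum_Suc_diff) simp
    have t2: "(\<Sum>i\<in>{1..m1}. G j (Suc i) - G j i) = G j (Suc m1) - G j 1"
      by (rule sum_Suc_diff) simp
    have "(\<Sum>i\<in>{1..m1}. e i j) = (\<Sum>i\<in>{1..m1}. \<theta> i j) - (\<Sum>i\<in>{1..m1}. VV (Suc i) j - VV i j)
        + (\<Sum>i\<in>{1..m1}. G j (Suc i) - G j i) * x j"
    proof -
      have "(\<Sum>i\<in>{1..m1}. e i j) = (\<Sum>i\<in>{1..m1}. \<theta> i j - (VV (Suc i) j - VV i j) + (G j (Suc i) - G j i) * x j)"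
        by (rule sum.cong) (simp_all add: e_def algebra_simps)
      also have "\<dots> = (\<Sum>i\<in>{1..m1}. \<theta> i j) - (\<Sum>i\<in>{1..m1}. VV (Suc i) j - VV i j)
        + (\<Sum>i\<in>{1..m1}. G j (Suc i) - G j i) * x j"
        by (simp add: sum.distrib sum_subtractf sum_distrib_right left_diff_distrib)
      finally show ?thesis .
    qed
    then show ?thesis unfolding e0_def t1 t2 VVm Gm by simp
  qed
  have e0nn: "\<forall>j\<in>NJ. 0 \<le> e0 j" using c2 unfolding e0_def by simp
  have enn: "\<forall>i\<in>{1..m1}. \<forall>j\<in>NJ. 0 \<le> e i j" using c3 unfolding e_def by simp
  have tot: "(\<Sum>j\<in>NJ. e0 j + (\<Sum>i\<in>{1..m1}. e i j)) \<le> 0"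
  proof -
    have "(\<Sum>j\<in>NJ. e0 j + (\<Sum>i\<in>{1..m1}. e i j)) = (\<Sum>j\<in>NJ. lam j) + (\<Sum>j\<in>NJ. \<Sum>i\<in>{1..m1}. \<theta> i j)"
      unfolding esum by (simp add: sum.distrib)
    also have "(\<Sum>j\<in>NJ. \<Sum>i\<in>{1..m1}. \<theta> i j) = (\<Sum>i\<in>{1..m1}. \<Sum>j\<in>NJ. \<theta> i j)" by (rule sum.swap)
    finally show ?thesis using c1 by simp
  qed
  have e0: "e i j = 0" if ij: "i \<in> {1..m1}" "j \<in> NJ" for i j
  proof -
    have "e i j \<le> (\<Sum>i\<in>{1..m1}. e i j)"
      using enn ij by (intro member_le_sum) auto
    also have "\<dots> \<le> e0 j + (\<Sum>i\<in>{1..m1}. e i j)" using e0nn ij by simp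
    also have "\<dots> \<le> (\<Sum>j\<in>NJ. e0 j + (\<Sum>i\<in>{1..m1}. e i j))"
      using e0nn enn ij finNJ by (intro member_le_sum) (auto intro!: add_nonneg_nonneg sum_nonneg)
    finally show ?thesis using tot enn ij by force
  qed
  have tail: "(\<Sum>i\<in>{p..m1}. \<theta> i j) \<le> G j p * x j" if pj: "p \<in> {1..m1}" "j \<in> NJ" for p j
  proof -
    have th: "\<theta> i j = (VV (Suc i) j - VV i j) - (G j (Suc i) - G j i) * x j" if "i \<in> {p..m1}" for i
      using e0[of i j] that pj unfolding e_def by (auto simp: algebra_simps)
    have t1: "(\<Sum>i\<in>{p..m1}. VV (Suc i) j - VV i j) = VV (Suc m1) j - VV p j"
      by (rule sum_Suc_diff) (use pj in simp)
    have t2: "(\<Sum>i\<in>{p..m1}. G j (Suc i) - G j i) = G j (Suc m1) - G j p"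
      by (rule sum_Suc_diff) (use pj in simp)
    have "(\<Sum>i\<in>{p..m1}. \<theta> i j) = (\<Sum>i\<in>{p..m1}. (VV (Suc i) j - VV i j) - (G j (Suc i) - G j i) * x j)"
      using th by (rule sum.cong[OF refl])
    also have "\<dots> = (\<Sum>i\<in>{p..m1}. VV (Suc i) j - VV i j) - (\<Sum>i\<in>{p..m1}. G j (Suc i) - G j i) * x j"
      by (simp add: sum.distrib sum_subtractf sum_distrib_right left_diff_distrib)
    also have "\<dots> = - VV p j - (- G j p) * x j" unfolding t1 t2 VVm Gm by simp
    finally have "(\<Sum>i\<in>{p..m1}. \<theta> i j) = G j p * x j - VV p j" by simp
    moreover have "0 \<le> VV p j" using nn pj unfolding VV_def m1_def by auto
    ultimately show ?thesis by simp
  qed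
  show ?thesis
  proof (cases "S = {}")
    case True
    then show ?thesis unfolding epsQ_def einv_def by simp
  next
    case Sne: False
    have "\<forall>j\<in>NJ. \<exists>p. p \<in> {1..m1} \<and> \<pi> j p \<in> S \<and> (\<forall>q\<in>{1..m1}. \<pi> j q \<in> S \<longrightarrow> p \<le> q) \<and> epsQ gm j S = gm (\<pi> j p) j"
    proof
      fix j assume j: "j \<in> NJ"
      have bj: "bij_betw (\<pi> j) {1..m1} M" using bij j unfolding NJ_def m1_def by simp
      have sj: "\<forall>p q. 1 \<le> p \<and> p \<le> q \<and> q \<le> m1 \<longrightarrow> gm (\<pi> j p) j \<le> gm (\<pi> j q) j"
        using sorted j unfolding NJ_def m1_def by simp
      from first_index[where f="\<pi> j" and n=m1 and M=M and gm=gm and j=j and S=S, OF bj sj SM Sne]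
      show "\<exists>p. p \<in> {1..m1} \<and> \<pi> j p \<in> S \<and> (\<forall>q\<in>{1..m1}. \<pi> j q \<in> S \<longrightarrow> p \<le> q) \<and> epsQ gm j S = gm (\<pi> j p) j"
        by blast
    qed
    from bchoice[OF this] obtain p0 where p0: "\<forall>j\<in>NJ. p0 j \<in> {1..m1} \<and> \<pi> j (p0 j) \<in> S \<and> (\<forall>q\<in>{1..m1}. \<pi> j q \<in> S \<longrightarrow> p0 j \<le> q) \<and> epsQ gm j S = gm (\<pi> j (p0 j)) j"
      by blast
    have einvG: "einv (epsQ gm j S) = G j (p0 j)" if "j \<in> NJ" for j
    proof -
      have "p0 j \<in> {1..m1}" "epsQ gm j S = gm (\<pi> j (p0 j)) j" using p0 that by auto
      then show ?thesis unfolding G_def m1_def by simp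
    qed
    have "(\<Sum>i\<in>S. x i) \<le> (\<Sum>i\<in>S. \<Sum>j\<in>NJ. \<theta> (inv_into {1..m1} (\<pi> j) i) j)"
      using c4 SM by (intro sum_mono) auto
    also have "\<dots> = (\<Sum>j\<in>NJ. \<Sum>i\<in>S. \<theta> (inv_into {1..m1} (\<pi> j) i) j)" by (rule sum.swap)
    also have "\<dots> \<le> (\<Sum>j\<in>NJ. G j (p0 j) * x j)"
    proof (rule sum_mono)
      fix j assume j: "j \<in> NJ"
      have bj: "bij_betw (\<pi> j) {1..m1} M" using bij j unfolding NJ_def m1_def by simp
      let ?ell = "inv_into {1..m1} (\<pi> j)"
      have inj: "inj_on ?ell S"
        using bj SM unfolding bij_betw_def by (metis inj_on_inv_into)
      have sub: "?ell ` S \<subseteq> {p0 j..m1}"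
      proof
        fix q assume "q \<in> ?ell ` S"
        then obtain a where a: "a \<in> S" "q = ?ell a" by blast
        have aim: "a \<in> \<pi> j ` {1..m1}" using bj SM a unfolding bij_betw_def by blast
        have "q \<in> {1..m1}" unfolding a(2) by (rule inv_into_into[OF aim])
        moreover have "\<pi> j q = a" using a aim by (simp add: f_inv_into_f)
        ultimately show "q \<in> {p0 j..m1}" using p0 j a by force
      qed
      have "(\<Sum>i\<in>S. \<theta> (?ell i) j) = (\<Sum>q\<in>?ell ` S. \<theta> q j)"
        using inj by (simp add: sum.reindex)
      also have "\<dots> \<le> (\<Sum>q\<in>{p0 j..m1}. \<theta> q j)"
      proof (rule sum_mono2)
        show "finite {p0 j..m1}" by simp
        show "?ell ` S \<subseteq> {p0 j..m1}" by (rule sub)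
        fix q assume "q \<in> {p0 j..m1} - ?ell ` S"
        then have "q \<in> {1..m1}" using p0 j by auto
        then show "0 \<le> \<theta> q j" using nn j by auto
      qed
      also have "\<dots> \<le> G j (p0 j) * x j" using tail p0 j by auto
      finally show "(\<Sum>i\<in>S. \<theta> (?ell i) j) \<le> G j (p0 j) * x j" .
    qed
    also have "\<dots> = (\<Sum>j\<in>NJ. x j * einv (epsQ gm j S))"
      using einvG by (intro sum.cong) (auto simp: mult.commute)
    finally show ?thesis unfolding NJ_def by simp
  qed
qed



lemma suff:
  assumes finN: "finite N" and MN: "M \<subseteq> N"
    and gpos: "\<forall>i\<in>M. \<forall>j\<in>N - J. 0 < gm i j"
    and bij: "\<forall>j\<in>N - J. bij_betw (\<pi> j) {1..card M} M"
    and sorted: "\<forall>j\<in>N - J. \<forall>p q. 1 \<le> p \<and> p \<le> q \<and> q \<le> card M \<longrightarrow> gm (\<pi> j p) j \<le> gm (\<pi> j q) j"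
    and xN: "x \<in> N \<rightarrow>\<^sub>E {0..}"
    and ineq: "\<forall>S\<subseteq>M. (\<Sum>i\<in>S. x i) - (\<Sum>j\<in>N - J. x j * einv (epsQ gm j S)) \<le> 0"
  shows "x \<in> fst ` QQ N J M gm \<pi>"
proof -
  define m1 where "m1 = card M"
  define NJ where "NJ = N - J"
  define G where "G = (\<lambda>j i. if i \<in> {1..card M} then einv (gm (\<pi> j i) j) else 0)"
  define K where "K = NJ \<times> {1..m1}"
  define w where "w = (\<lambda>(j, p). x j * (G j p - G j (Suc p)))"
  define E where "E = (\<lambda>(j, p) a. a \<in> \<pi> j ` {1..p})"
  have finNJ: "finite NJ" unfolding NJ_def using finN by simp
  have finM: "finite M" using finN MN finite_subset by blast
  have finK: "finite K" unfolding K_def using finNJ by simp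
  have xnn: "0 \<le> x i" if "i \<in> N" for i using xN that by (auto simp: PiE_def Pi_def)
  have bj: "bij_betw (\<pi> j) {1..m1} M" if "j \<in> NJ" for j using bij that unfolding NJ_def m1_def by simp
  have Gm: "G j (Suc m1) = 0" for j unfolding G_def m1_def by simp
  have Gmono: "G j (Suc p) \<le> G j p" if j: "j \<in> NJ" and p: "p \<in> {1..m1}" for j p
  proof (cases "Suc p \<le> m1")
    case True
    have "\<pi> j p \<in> M" using bj[OF j] p unfolding bij_betw_def by blast
    then have pos: "0 < gm (\<pi> j p) j" using gpos j unfolding NJ_def by blast
    have "gm (\<pi> j p) j \<le> gm (\<pi> j (Suc p)) j" using sorted j p True unfolding NJ_def m1_def by auto
    then have "einv (gm (\<pi> j (Suc p)) j) \<le> einv (gm (\<pi> j p) j)" using pos by (rule einv_anti[rotated])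
    then show ?thesis using True p unfolding G_def m1_def by auto
  next
    case False
    have "\<pi> j p \<in> M" using bj[OF j] p unfolding bij_betw_def by blast
    then have pos: "0 < gm (\<pi> j p) j" using gpos j unfolding NJ_def by blast
    then show ?thesis using False p einv_nonneg[OF pos] unfolding G_def m1_def by auto
  qed
  have wnn: "\<forall>k\<in>K. 0 \<le> w k"
  proof
    fix k assume "k \<in> K"
    then obtain j p where k: "k = (j, p)" "j \<in> NJ" "p \<in> {1..m1}" unfolding K_def by blast
    have "j \<in> N" using k unfolding NJ_def by simp
    then show "0 \<le> w k" unfolding k w_def using Gmono[OF k(2,3)] xnn by simp
  qed
  have dnn: "\<forall>a\<in>M. 0 \<le> x a" using xnn MN by blast
  have hall: "hallc K M w x E"
    unfolding hallc_def
  proof (intro allI impI)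
    fix S assume SM: "S \<subseteq> M"
    show "sum x S \<le> sum w {k \<in> K. \<exists>a\<in>S. E k a}"
    proof (cases "S = {}")
      case True
      have "0 \<le> sum w {k \<in> K. \<exists>a\<in>S. E k a}" using wnn by (intro sum_nonneg) auto
      then show ?thesis using True by simp
    next
      case Sne: False
      have "\<forall>j\<in>NJ. \<exists>p. p \<in> {1..m1} \<and> \<pi> j p \<in> S \<and> (\<forall>q\<in>{1..m1}. \<pi> j q \<in> S \<longrightarrow> p \<le> q) \<and> epsQ gm j S = gm (\<pi> j p) j"
      proof
        fix j assume j: "j \<in> NJ"
        have sj: "\<forall>p q. 1 \<le> p \<and> p \<le> q \<and> q \<le> m1 \<longrightarrow> gm (\<pi> j p) j \<le> gm (\<pi> j q) j"
          using sorted j unfolding NJ_def m1_def by simp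
        from first_index[where f="\<pi> j" and n=m1 and M=M and gm=gm and j=j and S=S, OF bj[OF j] sj SM Sne]
        show "\<exists>p. p \<in> {1..m1} \<and> \<pi> j p \<in> S \<and> (\<forall>q\<in>{1..m1}. \<pi> j q \<in> S \<longrightarrow> p \<le> q) \<and> epsQ gm j S = gm (\<pi> j p) j"
          by blast
      qed
      from bchoice[OF this] obtain p0 where p0: "\<forall>j\<in>NJ. p0 j \<in> {1..m1} \<and> \<pi> j (p0 j) \<in> S \<and> (\<forall>q\<in>{1..m1}. \<pi> j q \<in> S \<longrightarrow> p0 j \<le> q) \<and> epsQ gm j S = gm (\<pi> j (p0 j)) j"
        by blast
      have einvG: "einv (epsQ gm j S) = G j (p0 j)" if "j \<in> NJ" for j
      proof -
        have "p0 j \<in> {1..m1}" "epsQ gm j S = gm (\<pi> j (p0 j)) j" using p0 that by auto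
        then show ?thesis unfolding G_def m1_def by simp
      qed
      have NSeq: "{k \<in> K. \<exists>a\<in>S. E k a} = Sigma NJ (\<lambda>j. {p0 j..m1})"
      proof (rule set_eqI)
        fix k :: "'a \<times> nat"
        obtain j p where k: "k = (j, p)" by (cases k)
        show "k \<in> {k \<in> K. \<exists>a\<in>S. E k a} \<longleftrightarrow> k \<in> Sigma NJ (\<lambda>j. {p0 j..m1})"
        proof
          assume "k \<in> {k \<in> K. \<exists>a\<in>S. E k a}"
          then have jp: "j \<in> NJ" "p \<in> {1..m1}" and "\<exists>a\<in>S. a \<in> \<pi> j ` {1..p}"
            unfolding k K_def E_def by auto
          then obtain q where q: "q \<in> {1..p}" "\<pi> j q \<in> S" by blast
          then have "q \<in> {1..m1}" using jp by auto
          then have "p0 j \<le> q" using p0 jp q by blast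
          then show "k \<in> Sigma NJ (\<lambda>j. {p0 j..m1})" using k jp q by auto
        next
          assume "k \<in> Sigma NJ (\<lambda>j. {p0 j..m1})"
          then have jp: "j \<in> NJ" "p \<in> {p0 j..m1}" unfolding k by auto
          then have "p0 j \<in> {1..m1}" "\<pi> j (p0 j) \<in> S" using p0 by auto
          then have "k \<in> K" "E k (\<pi> j (p0 j))" unfolding k K_def E_def using jp by auto
          then show "k \<in> {k \<in> K. \<exists>a\<in>S. E k a}" using \<open>\<pi> j (p0 j) \<in> S\<close> by blast
        qed
      qed
      have "sum w {k \<in> K. \<exists>a\<in>S. E k a} = (\<Sum>j\<in>NJ. \<Sum>p\<in>{p0 j..m1}. w (j, p))"
        unfolding NSeq using sum.Sigma[of NJ "\<lambda>j. {p0 j..m1}" "\<lambda>j p. w (j, p)"] finNJ by simp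
      also have "\<dots> = (\<Sum>j\<in>NJ. x j * G j (p0 j))"
      proof (rule sum.cong[OF refl])
        fix j assume j: "j \<in> NJ"
        have t: "(\<Sum>p\<in>{p0 j..m1}. G j (Suc p) - G j p) = G j (Suc m1) - G j (p0 j)"
          by (rule sum_Suc_diff) (use p0 j in auto)
        have "(\<Sum>p\<in>{p0 j..m1}. w (j, p)) = x j * (\<Sum>p\<in>{p0 j..m1}. G j p - G j (Suc p))"
          unfolding w_def by (simp add: sum_distrib_left)
        also have "(\<Sum>p\<in>{p0 j..m1}. G j p - G j (Suc p)) = - (\<Sum>p\<in>{p0 j..m1}. G j (Suc p) - G j p)"
          by (simp add: sum_negf[symmetric])
        finally show "(\<Sum>p\<in>{p0 j..m1}. w (j, p)) = x j * G j (p0 j)" unfolding t Gm by simp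
      qed
      also have "\<dots> = (\<Sum>j\<in>N - J. x j * einv (epsQ gm j S))"
        using einvG unfolding NJ_def by (intro sum.cong) auto
      finally show ?thesis using ineq SM by force
    qed
  qed
  obtain f where f: "solc K M w x E f" using gale[OF finK finM wnn dnn hall] by blast
  have fnn: "0 \<le> f k a" for k a using f unfolding solc_def by blast
  have fE: "f k a = 0" if "\<not> E k a" for k a using f that unfolding solc_def by blast
  have fsup: "sum (f k) M \<le> w k" if "k \<in> K" for k using f that unfolding solc_def by blast
  have fdem: "(\<Sum>k\<in>K. f k a) = x a" if "a \<in> M" for a using f that unfolding solc_def by blast
  define \<theta> where "\<theta> q j = (\<Sum>p\<in>{1..m1}. f (j, p) (\<pi> j q))" for q j
  define V where "V i j = G j i * x j - (\<Sum>q\<in>{i..m1}. \<theta> q j)" for i j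
  define lam where "lam j = - (\<Sum>q\<in>{1..m1}. \<theta> q j)" for j
  define VV where "VV = (\<lambda>i j. if i \<in> {1..card M} then V i j else (0::real))"
  have VVeq: "VV i j = V i j" if "1 \<le> i" for i j
    using that unfolding VV_def V_def G_def m1_def by auto
  have thnn: "0 \<le> \<theta> q j" for q j unfolding \<theta>_def using fnn by (intro sum_nonneg) auto
  have F1: "f (j, p) (\<pi> j q) = 0" if "j \<in> NJ" "p < q" "q \<in> {1..m1}" for j p q
  proof (rule fE)
    show "\<not> E (j, p) (\<pi> j q)"
    proof
      assume "E (j, p) (\<pi> j q)"
      then obtain q' where q': "q' \<in> {1..p}" "\<pi> j q = \<pi> j q'" unfolding E_def by auto
      have "inj_on (\<pi> j) {1..m1}" using bj[OF that(1)] unfolding bij_betw_def by blast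
      then have "q = q'" using q' that by (auto dest: inj_onD)
      then show False using q' that by auto
    qed
  qed
  have F2: "(\<Sum>q\<in>{i..m1}. \<theta> q j) \<le> G j i * x j" if j: "j \<in> NJ" and i: "i \<in> {1..m1}" for i j
  proof -
    have "(\<Sum>q\<in>{i..m1}. \<theta> q j) = (\<Sum>q\<in>{i..m1}. \<Sum>p\<in>{i..m1}. f (j, p) (\<pi> j q))"
    proof (rule sum.cong[OF refl])
      fix q assume q: "q \<in> {i..m1}"
      show "\<theta> q j = (\<Sum>p\<in>{i..m1}. f (j, p) (\<pi> j q))"
        unfolding \<theta>_def
      proof (rule sum.mono_neutral_right)
        show "finite {1..m1}" by simp
        show "{i..m1} \<subseteq> {1..m1}" using i by auto
        show "\<forall>p\<in>{1..m1} - {i..m1}. f (j, p) (\<pi> j q) = 0"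
          using F1[OF j] q i by auto
      qed
    qed
    also have "\<dots> \<le> (\<Sum>q\<in>{1..m1}. \<Sum>p\<in>{i..m1}. f (j, p) (\<pi> j q))"
      using i fnn by (intro sum_mono2) (auto intro: sum_nonneg)
    also have "\<dots> = (\<Sum>p\<in>{i..m1}. \<Sum>q\<in>{1..m1}. f (j, p) (\<pi> j q))" by (rule sum.swap)
    also have "\<dots> = (\<Sum>p\<in>{i..m1}. sum (f (j, p)) M)"
    proof (rule sum.cong[OF refl])
      fix p
      show "(\<Sum>q\<in>{1..m1}. f (j, p) (\<pi> j q)) = sum (f (j, p)) M"
        using sum.reindex_bij_betw[OF bj[OF j], of "f (j, p)"] by simp
    qed
    also have "\<dots> \<le> (\<Sum>p\<in>{i..m1}. w (j, p))"
      using i j by (intro sum_mono fsup) (auto simp: K_def)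
    also have "\<dots> = x j * (\<Sum>p\<in>{i..m1}. G j p - G j (Suc p))"
      unfolding w_def by (simp add: sum_distrib_left)
    also have "(\<Sum>p\<in>{i..m1}. G j p - G j (Suc p)) = - (\<Sum>p\<in>{i..m1}. G j (Suc p) - G j p)"
      by (simp add: sum_negf[symmetric])
    also have "(\<Sum>p\<in>{i..m1}. G j (Suc p) - G j p) = G j (Suc m1) - G j i"
      by (rule sum_Suc_diff) (use i in auto)
    finally show ?thesis unfolding Gm by (simp add: mult.commute)
  qed
  have F3: "(\<Sum>j\<in>NJ. \<theta> (inv_into {1..m1} (\<pi> j) a) j) = x a" if a: "a \<in> M" for a
  proof -
    have "\<theta> (inv_into {1..m1} (\<pi> j) a) j = (\<Sum>p\<in>{1..m1}. f (j, p) a)" if j: "j \<in> NJ" for j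
    proof -
      have "a \<in> \<pi> j ` {1..m1}" using bj[OF j] a unfolding bij_betw_def by blast
      then have "\<pi> j (inv_into {1..m1} (\<pi> j) a) = a" by (rule f_inv_into_f)
      then show ?thesis unfolding \<theta>_def by simp
    qed
    then have "(\<Sum>j\<in>NJ. \<theta> (inv_into {1..m1} (\<pi> j) a) j) = (\<Sum>j\<in>NJ. \<Sum>p\<in>{1..m1}. f (j, p) a)"
      by (rule sum.cong[OF refl])
    also have "\<dots> = (\<Sum>k\<in>K. f k a)" unfolding K_def by (simp add: sum.cartesian_product')
    also have "\<dots> = x a" by (rule fdem[OF a])
    finally show ?thesis .
  qed
  have "(x, \<theta>, V, lam) \<in> QQ N J M gm \<pi>"
    unfolding QQ_mem[OF G_def VV_def] m1_def[symmetric] NJ_def[symmetric]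
  proof (intro conjI ballI)
    show "x \<in> N \<rightarrow>\<^sub>E {0..}" by (rule xN)
  next
    fix i j assume i: "i \<in> {1..m1}" and j: "j \<in> NJ"
    show "0 \<le> \<theta> i j" by (rule thnn)
    show "0 \<le> V i j" using F2[OF j i] unfolding V_def by simp
  next
    have "(\<Sum>j\<in>NJ. lam j) = - (\<Sum>j\<in>NJ. \<Sum>q\<in>{1..m1}. \<theta> q j)" unfolding lam_def by (simp add: sum_negf)
    also have "(\<Sum>j\<in>NJ. \<Sum>q\<in>{1..m1}. \<theta> q j) = (\<Sum>i\<in>{1..m1}. \<Sum>j\<in>NJ. \<theta> i j)" by (rule sum.swap)
    finally show "(\<Sum>i\<in>{1..m1}. \<Sum>j\<in>NJ. \<theta> i j) + (\<Sum>j\<in>NJ. lam j) \<le> 0" by simp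
  next
    fix j assume j: "j \<in> NJ"
    show "0 \<le> lam j - VV 1 j + x j * G j 1"
      unfolding VVeq[OF order_refl] V_def lam_def by simp
  next
    fix i j assume i: "i \<in> {1..m1}" and j: "j \<in> NJ"
    have s: "(\<Sum>q\<in>{i..m1}. \<theta> q j) = \<theta> i j + (\<Sum>q\<in>{Suc i..m1}. \<theta> q j)"
      using i by (intro sum.atLeast_Suc_atMost) auto
    show "0 \<le> \<theta> i j + VV i j - VV (i + 1) j + (G j (i + 1) - G j i) * x j"
    proof -
      have v1: "VV i j = V i j" "VV (i + 1) j = V (Suc i) j" using VVeq i by auto
      show ?thesis unfolding v1 V_def s by (simp add: algebra_simps)
    qed
  next
    fix a assume a: "a \<in> M"
    show "0 \<le> (\<Sum>j\<in>NJ. \<theta> (inv_into {1..m1} (\<pi> j) a) j) - x a" using F3[OF a] by simp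
  qed
  then show ?thesis by force
qed


theorem theorem7:
  fixes A :: "real^'n^'m" and b :: "real^'m" and B :: "'n set"
    and C :: "(real^'n) set" and k :: 'n and \<pi> :: "'n \<Rightarrow> nat \<Rightarrow> 'n"
  assumes "rank A = CARD('m)"
    and "is_feasible_basis A b B"
    and "open C" and "convex C"
    and "basic_sol A b B \<notin> closure C"
    and "recc C \<subseteq> recc (PB A b B)"
    and "k \<in> N2 A b B C"
    and "\<not> N0 A b B C \<subseteq> Jset A b B C k"
    and "sorted_perms A b B C k \<pi>"
  shows "fst ` Qk A b B C k \<pi> =
    {x \<in> (- B) \<rightarrow>\<^sub>E {0..}. \<forall>S \<subseteq> Mset A b B C k.
        (\<Sum>i\<in>S. x i) - (\<Sum>j\<in>(- B) - Jset A b B C k. x j * einv (eps A b B C k j S)) \<le> 0}"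
proof -
  let ?N = "- B" and ?J = "Jset A b B C k" and ?M = "Mset A b B C k" and ?gm = "gam A b B C k"
  have finN: "finite ?N" by (rule finite_subset[OF subset_UNIV]) simp
  have MN: "?M \<subseteq> ?N" unfolding Mset_def Jset_def by auto
  have gpos: "\<forall>i\<in>?M. \<forall>j\<in>?N - ?J. 0 < ?gm i j" unfolding Mset_def by auto
  have bij: "\<forall>j\<in>?N - ?J. bij_betw (\<pi> j) {1..card ?M} ?M"
    using assms(9) unfolding sorted_perms_def by auto
  have sorted: "\<forall>j\<in>?N - ?J. \<forall>p q. 1 \<le> p \<and> p \<le> q \<and> q \<le> card ?M \<longrightarrow> ?gm (\<pi> j p) j \<le> ?gm (\<pi> j q) j"
    using assms(9) unfolding sorted_perms_def by auto
  show ?thesis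
    unfolding Qk_QQ eps_epsQ
  proof (rule set_eqI iffI)+
    fix x assume "x \<in> fst ` QQ ?N ?J ?M ?gm \<pi>"
    then obtain \<theta> v lam where mem: "(x, \<theta>, v, lam) \<in> QQ ?N ?J ?M ?gm \<pi>" by force
    have "x \<in> ?N \<rightarrow>\<^sub>E {0..}" using mem unfolding QQ_def Let_def by simp
    moreover have "\<forall>S\<subseteq>?M. (\<Sum>i\<in>S. x i) - (\<Sum>j\<in>?N - ?J. x j * einv (epsQ ?gm j S)) \<le> 0"
      using nec[OF finN bij sorted mem] by blast
    ultimately show "x \<in> {x \<in> ?N \<rightarrow>\<^sub>E {0..}. \<forall>S\<subseteq>?M. (\<Sum>i\<in>S. x i) - (\<Sum>j\<in>?N - ?J. x j * einv (epsQ ?gm j S)) \<le> 0}"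
      by blast
  next
    fix x assume "x \<in> {x \<in> ?N \<rightarrow>\<^sub>E {0..}. \<forall>S\<subseteq>?M. (\<Sum>i\<in>S. x i) - (\<Sum>j\<in>?N - ?J. x j * einv (epsQ ?gm j S)) \<le> 0}"
    then show "x \<in> fst ` QQ ?N ?J ?M ?gm \<pi>"
      using suff[OF finN MN gpos bij sorted] by blast
  qed
qed

end
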